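(* Let $N\ge2$. There does not exist any pure $(N-1)$-DI qubit assemblage $\sigma^{\mathrm{bit}}_{\boldsymbol a|\boldsymbol x}=P_{\boldsymbol A|\boldsymbol X}(\boldsymbol a|\boldsymbol x)\,|\psi(\boldsymbol a,\boldsymbol x)\rangle\langle\psi(\boldsymbol a,\boldsymbol x)|$, with $\boldsymbol a=(a_1,\dots,a_{N-1})$ and $\boldsymbol x=(x_1,\dots,x_{N-1})$ ranging over finite sets, that can be transformed via 1W-LOCCs into every qubit assemblage of minimal dimension $\{\sigma^{(\mathrm{target})}_{a|x}\}_{a,x\in\{0,1\}}$.
   Context: A pure $(N-1)$-DI qubit assemblage consists of a conditional probability distribution $P_{\boldsymbol A|\boldsymbol X}(\boldsymbol a|\boldsymbol x)$ of the outputs $\boldsymbol a$ of $N-1$ untrusted parties given their inputs $\boldsymbol x$, and unit vectors $|\psi(\boldsymbol a,\boldsymbol x)\rangle\in\mathbb C^2$ of a trusted party, such that no-signaling holds between the trusted party and the untrusted ones: $\sum_{\boldsymbol a}\sigma^{\mathrm{bit}}_{\boldsymbol a|\boldsymbol x}$ is independent of $\boldsymbol x$ (the untrusted parties may signal among themselves). A qubit assemblage of minimal dimension is a family $\{\sigma_{a|x}\}_{a,x\in\{0,1\}}$ of positive semidefinite operators on $\mathbb C^2$ with $\sum_a\sigma_{a|x}$ a density operator independent of $x$. A 1W-LOCC (one-way local operation with classical communication from the trusted to the untrusted parties) maps $\sigma^{\mathrm{bit}}$ to the assemblage $\sigma'_{a_f|x_f}=\sum_{\boldsymbol a,\boldsymbol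 x,\omega}P_{\boldsymbol X|X_f,\Omega}(\boldsymbol x|x_f,\omega)\,P_{A_f|\boldsymbol A,\boldsymbol X,\Omega,X_f}(a_f|\boldsymbol a,\boldsymbol x,\omega,x_f)\,P_{\boldsymbol A|\boldsymbol X}(\boldsymbol a|\boldsymbol x)\,K_\omega|\psi(\boldsymbol a,\boldsymbol x)\rangle\langle\psi(\boldsymbol a,\boldsymbol x)|K_\omega^\dagger$, where $\{K_\omega\}$ are the Kraus operators (acting on $\mathbb C^2$) of a quantum instrument on the trusted party whose classical outcome $\omega$ is communicated to the untrusted parties, and $P_{\boldsymbol X|X_f,\Omega}$, $P_{A_f|\boldsymbol A,\boldsymbol X,\Omega,X_f}$ are conditional probability distributions (classical pre- and post-processing), with $a_f,x_f\in\{0,1\}$. *)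

theory Defs
  imports "HOL-Analysis.Analysis" "HOL-Library.Complex_Order"
begin

type_synonym cvec = "complex ^ 2"
type_synonym cmat = "complex ^ 2 ^ 2"

definition adjm :: "cmat \<Rightarrow> cmat" where
  "adjm M = (\<chi> i j. cnj (M $ j $ i))"

definition outer :: "cvec \<Rightarrow> cmat" where
  "outer v = (\<chi> i j. v $ i * cnj (v $ j))"

definition trace2 :: "cmat \<Rightarrow> complex" where
  "trace2 M = (\<Sum>i\<in>UNIV. M $ i $ i)"

definition psd :: "cmat \<Rightarrow> bool" where
  "psd M \<longleftrightarrow> (\<forall>v::cvec. 0 \<le> (\<Sum>i\<in>UNIV. cnj (v $ i) * (M *v v) $ i))"

definition density_op :: "cmat \<Rightarrow> bool" where
  "density_op M \<longleftrightarrow> psd M \<and> trace2 M = 1"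

definition qubit_assemblage :: "(nat \<Rightarrow> nat \<Rightarrow> cmat) \<Rightarrow> bool" where
  "qubit_assemblage \<sigma> \<longleftrightarrow>
     (\<forall>a\<in>{0,1}. \<forall>x\<in>{0,1}. psd (\<sigma> a x)) \<and>
     density_op (\<sigma> 0 0 + \<sigma> 1 0) \<and>
     \<sigma> 0 0 + \<sigma> 1 0 = \<sigma> 0 1 + \<sigma> 1 1"

text \<open>Tuples (s_1,...,s_{N-1}) with s_i in S i, represented as lists of length N-1 (indices 0..N-2).\<close>
definition tuples :: "nat \<Rightarrow> (nat \<Rightarrow> 'a set) \<Rightarrow> 'a list set" where
  "tuples N S = {l. length l = N - 1 \<and> (\<forall>i<N - 1. l ! i \<in> S i)}"

definition pure_DI_assemblage ::
  "nat list set \<Rightarrow> nat list set \<Rightarrow> (nat list \<Rightarrow> nat list \<Rightarrow> real) \<Rightarrow> (nat list \<Rightarrow> nat list \<Rightarrow> cvec) \<Rightarrow> bool" where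
  "pure_DI_assemblage OA IX P \<psi> \<longleftrightarrow>
     (\<forall>x\<in>IX. (\<forall>a\<in>OA. 0 \<le> P a x) \<and> (\<Sum>a\<in>OA. P a x) = 1) \<and>
     (\<forall>x\<in>IX. \<forall>a\<in>OA. norm (\<psi> a x) = 1) \<and>
     (\<forall>x\<in>IX. \<forall>x'\<in>IX. (\<Sum>a\<in>OA. P a x *\<^sub>R outer (\<psi> a x)) = (\<Sum>a\<in>OA. P a x' *\<^sub>R outer (\<psi> a x')))"

definition instrument :: "nat set \<Rightarrow> (nat \<Rightarrow> cmat) \<Rightarrow> bool" where
  "instrument Om K \<longleftrightarrow> finite Om \<and> (\<Sum>w\<in>Om. adjm (K w) ** K w) = mat 1"

text \<open>Result of a 1W-LOCC (instrument K on Om, pre-processing PX(x|xf,w), post-processing PA(af|a,x,w,xf)).\<close>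
definition locc_output ::
  "nat list set \<Rightarrow> nat list set \<Rightarrow> (nat list \<Rightarrow> nat list \<Rightarrow> real) \<Rightarrow> (nat list \<Rightarrow> nat list \<Rightarrow> cvec) \<Rightarrow>
   nat set \<Rightarrow> (nat \<Rightarrow> cmat) \<Rightarrow> (nat list \<Rightarrow> nat \<Rightarrow> nat \<Rightarrow> real) \<Rightarrow>
   (nat \<Rightarrow> nat list \<Rightarrow> nat list \<Rightarrow> nat \<Rightarrow> nat \<Rightarrow> real) \<Rightarrow> nat \<Rightarrow> nat \<Rightarrow> cmat" where
  "locc_output OA IX P \<psi> Om K PX PA af xf =
     (\<Sum>a\<in>OA. \<Sum>x\<in>IX. \<Sum>w\<in>Om.
        (PX x xf w * PA af a x w xf * P a x) *\<^sub>R (K w ** outer (\<psi> a x) ** adjm (K w)))"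

definition one_way_LOCC_reachable ::
  "nat list set \<Rightarrow> nat list set \<Rightarrow> (nat list \<Rightarrow> nat list \<Rightarrow> real) \<Rightarrow> (nat list \<Rightarrow> nat list \<Rightarrow> cvec) \<Rightarrow>
   (nat \<Rightarrow> nat \<Rightarrow> cmat) \<Rightarrow> bool" where
  "one_way_LOCC_reachable OA IX P \<psi> \<sigma>t \<longleftrightarrow>
     (\<exists>Om K PX PA.
        instrument Om K \<and>
        (\<forall>xf\<in>{0,1}. \<forall>w\<in>Om. (\<forall>x\<in>IX. 0 \<le> PX x xf w) \<and> (\<Sum>x\<in>IX. PX x xf w) = 1) \<and>
        (\<forall>a\<in>OA. \<forall>x\<in>IX. \<forall>w\<in>Om. \<forall>xf\<in>{0,1}.
            (\<forall>af\<in>{0,1}. 0 \<le> PA af a x w xf) \<and> PA 0 a x w xf + PA 1 a x w xf = 1) \<and>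
        (\<forall>af\<in>{0,1}. \<forall>xf\<in>{0,1}. locc_output OA IX P \<psi> Om K PX PA af xf = \<sigma>t af xf))"

end

theory Submission
  imports Defs
begin

definition Qf :: "cvec \<Rightarrow> cmat \<Rightarrow> complex" where
  "Qf v M = (\<Sum>i\<in>UNIV. cnj (v$i) * (M *v v)$i)"
definition ip :: "cvec \<Rightarrow> cvec \<Rightarrow> complex" where
  "ip v y = (\<Sum>i\<in>UNIV. cnj (v$i) * y$i)"
definition mk :: "complex \<Rightarrow> complex \<Rightarrow> cvec" where
  "mk p r = (\<chi> i. if i = 1 then p else r)"

lemma mk1[simp]: "mk p r $ 1 = p" and mk2[simp]: "mk p r $ 2 = r"
  by (auto simp: mk_def)

lemma finite_tuples:
  assumes "\<forall>i<N - 1. finite (S i)"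
  shows "finite (tuples N S)"
proof -
  have "tuples N S \<subseteq> {l. set l \<subseteq> (\<Union>i<N-1. S i) \<and> length l = N - 1}"
    unfolding tuples_def by (auto simp: in_set_conv_nth) blast
  moreover have "finite {l. set l \<subseteq> (\<Union>i<N-1. S i) \<and> length l = N - 1}"
    by (rule finite_lists_length_eq) (use assms in auto)
  ultimately show ?thesis by (rule finite_subset)
qed

lemma outer_Kv: "K ** outer v ** adjm K = outer (K *v v)"
  by (simp add: vec_eq_iff forall_2 sum_2 matrix_matrix_mult_def matrix_vector_mult_def outer_def adjm_def algebra_simps)

lemma Qf_add: "Qf v (M + M') = Qf v M + Qf v M'"
  by (simp add: Qf_def matrix_vector_mult_add_rdistrib sum.distrib algebra_simps)

lemma Qf_scaleR: "Qf v (r *\<^sub>R M) = of_real r * Qf v M"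
  by (simp add: Qf_def sum_2 matrix_vector_mult_def vector_scaleR_component) (simp add: scaleR_conv_of_real algebra_simps)

lemma Qf_zero: "Qf v 0 = 0"
  by (simp add: Qf_def sum_2 matrix_vector_mult_def)

lemma Qf_sum: "Qf v (sum f S) = (\<Sum>i\<in>S. Qf v (f i))"
  by (induction S rule: infinite_finite_induct) (auto simp: Qf_zero Qf_add)

lemma Qf_outer: "Qf v (outer y) = of_real ((cmod (ip v y))\<^sup>2)"
proof -
  have "Qf v (outer y) = ip v y * cnj (ip v y)"
    by (simp add: Qf_def ip_def sum_2 matrix_vector_mult_def outer_def algebra_simps)
  then show ?thesis by (metis complex_norm_square)
qed

lemma psd_scaled_outer: "r \<ge> 0 \<Longrightarrow> psd (r *\<^sub>R outer v)"
  unfolding psd_def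
proof
  fix w :: cvec
  assume "r \<ge> 0"
  have "(\<Sum>i\<in>UNIV. cnj (w $ i) * (r *\<^sub>R outer v *v w) $ i) = Qf w (r *\<^sub>R outer v)"
    by (simp add: Qf_def)
  also have "\<dots> = of_real (r * (cmod (ip w v))\<^sup>2)" by (simp add: Qf_scaleR Qf_outer)
  finally show "0 \<le> (\<Sum>i\<in>UNIV. cnj (w $ i) * (r *\<^sub>R outer v *v w) $ i)"
    using \<open>r \<ge> 0\<close> by (simp add: less_eq_complex_def)
qed

lemma psd_add: "psd M \<Longrightarrow> psd M' \<Longrightarrow> psd (M + M')"
  unfolding psd_def by (metis Qf_def Qf_add add_nonneg_nonneg)

lemma Phi_add: "(K::cmat) ** (M + M') ** (B::cmat) = K ** M ** B + K ** M' ** B"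
  by (simp add: vec_eq_iff sum_2 matrix_matrix_mult_def algebra_simps)

lemma Phi_scaleR: "(K::cmat) ** (r *\<^sub>R M) ** (B::cmat) = r *\<^sub>R (K ** M ** B)"
  by (simp add: vec_eq_iff sum_2 matrix_matrix_mult_def vector_scaleR_component) (simp add: scaleR_conv_of_real algebra_simps)

lemma Phi_sum: "(K::cmat) ** (sum f S) ** (B::cmat) = (\<Sum>i\<in>S. K ** f i ** B)"
  by (induction S rule: infinite_finite_induct) (auto simp: Phi_add)

lemma span_comp:
  fixes p r :: real and y :: cvec
  assumes pr: "p\<^sup>2 + r\<^sup>2 = 1"
    and o: "ip (mk (of_real (- r)) (of_real p)) y = 0"
  shows "y $ 1 = ip (mk (of_real p) (of_real r)) y * of_real p"
    and "y $ 2 = ip (mk (of_real p) (of_real r)) y * of_real r"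
proof -
  have o': "of_real p * y $ 2 = of_real r * y $ 1"
    using o by (simp add: ip_def sum_2)
  have pr': "(of_real p :: complex)^2 + (of_real r)^2 = 1"
    using pr by (metis of_real_add of_real_1 of_real_power)
  have "ip (mk (of_real p) (of_real r)) y * of_real p
        = of_real p ^2 * y $ 1 + of_real r * (of_real p * y $ 2)"
    by (simp add: ip_def sum_2 power2_eq_square algebra_simps)
  also have "\<dots> = (of_real p ^2 + of_real r ^2) * y $ 1"
    by (simp add: o' power2_eq_square algebra_simps)
  finally show "y $ 1 = ip (mk (of_real p) (of_real r)) y * of_real p"
    using pr' by simp
  have "ip (mk (of_real p) (of_real r)) y * of_real r
        = of_real r ^2 * y $ 2 + of_real r * (of_real p * y $ 1)"
    by (simp add: ip_def sum_2 power2_eq_square algebra_simps)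
  also have "\<dots> = of_real r ^2 * y $ 2 + of_real p * (of_real p * y $ 2)"
    by (simp add: o' algebra_simps)
  also have "\<dots> = (of_real p ^2 + of_real r ^2) * y $ 2"
    by (simp add: power2_eq_square algebra_simps)
  finally show "y $ 2 = ip (mk (of_real p) (of_real r)) y * of_real r"
    using pr' by simp
qed

lemma term_lemma:
  fixes p r c :: real and y :: cvec
  assumes pr: "p\<^sup>2 + r\<^sup>2 = 1" and c: "c \<ge> 0"
    and o: "c > 0 \<Longrightarrow> ip (mk (of_real (- r)) (of_real p)) y = 0"
  shows "c *\<^sub>R outer y = (c * (cmod (ip (mk (of_real p) (of_real r)) y))\<^sup>2) *\<^sub>R outer (mk (of_real p) (of_real r))"
proof (cases "c = 0")
  case True then show ?thesis by simp
next
  case False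
  then have "c > 0" using c by simp
  from span_comp[OF pr o[OF this]]
  have y1: "y $ 1 = ip (mk (of_real p) (of_real r)) y * of_real p"
    and y2: "y $ 2 = ip (mk (of_real p) (of_real r)) y * of_real r" .
  define l where "l = ip (mk (of_real p) (of_real r)) y"
  have ll: "l * cnj l = of_real ((cmod l)\<^sup>2)"
    by (metis complex_norm_square of_real_power)
  have ent: "outer y $ i $ j = (l * cnj l) * (outer (mk (of_real p) (of_real r)) $ i $ j)" for i j
  proof -
    have "outer y $ i $ j = y $ i * cnj (y $ j)" by (simp add: outer_def)
    moreover have "y $ i = l * mk (of_real p) (of_real r) $ i" for i
      using exhaust_2[of i] y1 y2 unfolding l_def[symmetric] by (auto simp: mult.commute)
    ultimately show ?thesis by (simp add: outer_def algebra_simps)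
  qed
  have "outer y = (cmod l)\<^sup>2 *\<^sub>R outer (mk (of_real p) (of_real r))"
    unfolding vec_eq_iff vector_scaleR_component using ent ll by (simp add: scaleR_conv_of_real)
  then show ?thesis by (simp add: l_def)
qed

lemma key_alg:
  fixes k11 k12 k21 k22 a1 a2 b1 b2 c1 c2 d1 d2 l1 l2 l3 l4 P R :: complex
  assumes e1: "k11*a1 + k12*a2 = l1" and e2: "k21*a1 + k22*a2 = 0"
    and e3: "k11*b1 + k12*b2 = 0" and e4: "k21*b1 + k22*b2 = l2"
    and e5: "k11*c1 + k12*c2 = l3*P" and e6: "k21*c1 + k22*c2 = l3*R"
    and e7: "k11*d1 + k12*d2 = -(l4*R)" and e8: "k21*d1 + k22*d2 = l4*P"
    and nz: "l1 \<noteq> 0" "l2 \<noteq> 0" "l3 \<noteq> 0" "l4 \<noteq> 0" "R \<noteq> 0"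
  shows "(a1*c2-a2*c1)*(b1*d2-b2*d1) \<noteq> 0 \<and>
         (a1*c2-a2*c1)*(b1*d2-b2*d1)*P^2 + (a1*d2-a2*d1)*(b1*c2-b2*c1)*R^2 = 0"
proof -
  define D where "D = k11*k22 - k12*k21"
  have h13: "D*(a1*c2-a2*c1) = l1*l3*R"
  proof -
    have "D*(a1*c2-a2*c1) = (k11*a1+k12*a2)*(k21*c1+k22*c2) - (k21*a1+k22*a2)*(k11*c1+k12*c2)"
      by (simp add: D_def algebra_simps)
    then show ?thesis using e1 e2 e5 e6 by simp
  qed
  have h24: "D*(b1*d2-b2*d1) = l2*l4*R"
  proof -
    have "D*(b1*d2-b2*d1) = (k11*b1+k12*b2)*(k21*d1+k22*d2) - (k21*b1+k22*b2)*(k11*d1+k12*d2)"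
      by (simp add: D_def algebra_simps)
    then show ?thesis using e3 e4 e7 e8 by simp
  qed
  have h14: "D*(a1*d2-a2*d1) = l1*l4*P"
  proof -
    have "D*(a1*d2-a2*d1) = (k11*a1+k12*a2)*(k21*d1+k22*d2) - (k21*a1+k22*a2)*(k11*d1+k12*d2)"
      by (simp add: D_def algebra_simps)
    then show ?thesis using e1 e2 e7 e8 by simp
  qed
  have h23: "D*(b1*c2-b2*c1) = -(l2*l3*P)"
  proof -
    have "D*(b1*c2-b2*c1) = (k11*b1+k12*b2)*(k21*c1+k22*c2) - (k21*b1+k22*b2)*(k11*c1+k12*c2)"
      by (simp add: D_def algebra_simps)
    then show ?thesis using e3 e4 e5 e6 by simp
  qed
  have r13: "l1*l3*R \<noteq> 0" using nz by simp
  then have D0: "D \<noteq> 0" using h13 by auto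
  have A0: "(a1*c2-a2*c1)*(b1*d2-b2*d1) \<noteq> 0"
    using h13 h24 nz D0 by (metis mult_eq_0_iff mult_zero_left)
  have "D^2 * ((a1*c2-a2*c1)*(b1*d2-b2*d1)*P^2 + (a1*d2-a2*d1)*(b1*c2-b2*c1)*R^2)
      = (D*(a1*c2-a2*c1))*(D*(b1*d2-b2*d1))*P^2 + (D*(a1*d2-a2*d1))*(D*(b1*c2-b2*c1))*R^2"
    by (simp add: power2_eq_square algebra_simps)
  also have "\<dots> = 0" unfolding h13 h24 h14 h23 by (simp add: power2_eq_square algebra_simps)
  finally show ?thesis using A0 D0 by simp
qed


lemma swap3: "(\<Sum>a\<in>A. \<Sum>x\<in>B. \<Sum>w\<in>C. f a x w) = (\<Sum>w\<in>C. \<Sum>a\<in>A. \<Sum>x\<in>B. f a x w)"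
proof -
  have "(\<Sum>a\<in>A. \<Sum>x\<in>B. \<Sum>w\<in>C. f a x w) = (\<Sum>a\<in>A. \<Sum>w\<in>C. \<Sum>x\<in>B. f a x w)"
    by (rule sum.cong[OF refl]) (rule sum.swap)
  also have "\<dots> = (\<Sum>w\<in>C. \<Sum>a\<in>A. \<Sum>x\<in>B. f a x w)" by (rule sum.swap)
  finally show ?thesis .
qed

theorem theoremS2:
  fixes N :: nat
  assumes "N \<ge> 2"
  shows "\<not> (\<exists>(A :: nat \<Rightarrow> nat set) (X :: nat \<Rightarrow> nat set) P \<psi>.
            (\<forall>i<N - 1. finite (A i) \<and> finite (X i)) \<and>
            pure_DI_assemblage (tuples N A) (tuples N X) P \<psi> \<and>
            (\<forall>\<sigma>t. qubit_assemblage \<sigma>t \<longrightarrow>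
                 one_way_LOCC_reachable (tuples N A) (tuples N X) P \<psi> \<sigma>t))"
proof
  assume "\<exists>(A :: nat \<Rightarrow> nat set) (X :: nat \<Rightarrow> nat set) P \<psi>.
            (\<forall>i<N - 1. finite (A i) \<and> finite (X i)) \<and>
            pure_DI_assemblage (tuples N A) (tuples N X) P \<psi> \<and>
            (\<forall>\<sigma>t. qubit_assemblage \<sigma>t \<longrightarrow>
                 one_way_LOCC_reachable (tuples N A) (tuples N X) P \<psi> \<sigma>t)"
  then obtain A X :: "nat \<Rightarrow> nat set" and P \<psi> where
    fin: "\<forall>i<N - 1. finite (A i) \<and> finite (X i)" and
    pda: "pure_DI_assemblage (tuples N A) (tuples N X) P \<psi>" and
    reach: "\<forall>\<sigma>t. qubit_assemblage \<sigma>t \<longrightarrow> one_way_LOCC_reachable (tuples N A) (tuples N X) P \<psi> \<sigma>t"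
    by blast
  define OA where "OA = tuples N A"
  define IX where "IX = tuples N X"
  have fOA: "finite OA" unfolding OA_def by (rule finite_tuples) (use fin in auto)
  have fIX: "finite IX" unfolding IX_def by (rule finite_tuples) (use fin in auto)
  define V where "V = (\<lambda>(a,x). \<psi> a x) ` (OA \<times> IX)"
  have fV: "finite V" unfolding V_def using fOA fIX by simp
  define g where "g = (\<lambda>(u1::cvec,u2::cvec,u3::cvec,u4::cvec).
     ((u1$1*u4$2-u1$2*u4$1)*(u2$1*u3$2-u2$2*u3$1)) /
     ((u1$1*u4$2-u1$2*u4$1)*(u2$1*u3$2-u2$2*u3$1) - (u1$1*u3$2-u1$2*u3$1)*(u2$1*u4$2-u2$2*u4$1)))"
  define F where "F = g ` (V \<times> V \<times> V \<times> V)"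
  have fF: "finite F" unfolding F_def using fV by simp
  have "infinite ({0<..<1::real} - {c. complex_of_real c \<in> F})"
  proof -
    have fin1: "finite {c. complex_of_real c \<in> F}"
      using finite_vimageI[OF fF, of complex_of_real] inj_of_real by (simp add: vimage_def)
    have "infinite {0<..<1::real}" by (rule infinite_Ioo) simp
    then show ?thesis using Diff_infinite_finite[OF fin1] by blast
  qed
  then obtain c :: real where "c \<in> {0<..<1::real} - {c. complex_of_real c \<in> F}"
    using infinite_imp_nonempty by blast
  then have c0: "0 < c" and c1: "c < 1" and cF: "complex_of_real c \<notin> F" by auto
  define p0 where "p0 = sqrt c"
  define r0 where "r0 = sqrt (1 - c)"
  have p0sq: "p0^2 = c" using c0 by (simp add: p0_def)
  have r0sq: "r0^2 = 1 - c" using c1 by (simp add: r0_def)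
  have p0pos: "p0 > 0" using c0 by (simp add: p0_def)
  have r0pos: "r0 > 0" using c1 by (simp add: r0_def)
  define tv :: "nat \<Rightarrow> nat \<Rightarrow> real \<times> real" where
    "tv af xf = (if xf = 0 then (if af = 0 then (1,0) else (0,1))
                 else (if af = 0 then (p0,r0) else (-r0,p0)))" for af xf
  define T where "T af xf = mk (of_real (fst (tv af xf))) (of_real (snd (tv af xf)))" for af xf
  define Tp where "Tp af xf = mk (of_real (- snd (tv af xf))) (of_real (fst (tv af xf)))" for af xf
  define \<sigma>t where "\<sigma>t af xf = (1/2::real) *\<^sub>R outer (T af xf)" for af xf
  have unit: "(fst (tv af xf))\<^sup>2 + (snd (tv af xf))\<^sup>2 = 1" for af xf
    using p0sq r0sq by (simp add: tv_def)
  have pp: "complex_of_real p0 * complex_of_real p0 = complex_of_real c"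
    using p0sq by (metis of_real_mult power2_eq_square)
  have rr: "complex_of_real r0 * complex_of_real r0 = 1 - complex_of_real c"
    using r0sq by (metis of_real_mult power2_eq_square of_real_1 of_real_diff)
  have qa: "qubit_assemblage \<sigma>t"
    unfolding qubit_assemblage_def density_op_def
  proof (intro conjI ballI)
    show "psd (\<sigma>t a x)" for a x by (simp add: \<sigma>t_def psd_scaled_outer)
    then show "psd (\<sigma>t 0 0 + \<sigma>t 1 0)" by (simp add: psd_add)
    show "trace2 (\<sigma>t 0 0 + \<sigma>t 1 0) = 1"
      by (simp add: trace2_def sum_2 \<sigma>t_def T_def tv_def outer_def vector_scaleR_component)
         (simp add: scaleR_conv_of_real)
    show "\<sigma>t 0 0 + \<sigma>t 1 0 = \<sigma>t 0 1 + \<sigma>t 1 1"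
      unfolding vec_eq_iff forall_2
      by (simp add: \<sigma>t_def T_def tv_def outer_def vector_scaleR_component scaleR_conv_of_real
          pp rr algebra_simps)
  qed
  then obtain Om K PX PA where
    ins: "instrument Om K" and
    px: "\<forall>xf\<in>{0,1}. \<forall>w\<in>Om. (\<forall>x\<in>IX. 0 \<le> PX x xf w) \<and> (\<Sum>x\<in>IX. PX x xf w) = 1" and
    pa: "\<forall>a\<in>OA. \<forall>x\<in>IX. \<forall>w\<in>Om. \<forall>xf\<in>{0,1}.
            (\<forall>af\<in>{0,1}. 0 \<le> PA af a x w xf) \<and> PA 0 a x w xf + PA 1 a x w xf = 1" and
    out: "\<forall>af\<in>{0,1}. \<forall>xf\<in>{0,1}. locc_output OA IX P \<psi> Om K PX PA af xf = \<sigma>t af xf"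
  proof -
    from reach qa have "one_way_LOCC_reachable OA IX P \<psi> \<sigma>t" by (simp add: OA_def IX_def)
    then show ?thesis unfolding one_way_LOCC_reachable_def using that by blast
  qed
  define coef where "coef w af xf a x = PX x xf w * PA af a x w xf * P a x" for w af xf a x
  define y where "y w a x = K w *v \<psi> a x" for w a x
  have Pnn: "0 \<le> P a x" if "a \<in> OA" "x \<in> IX" for a x
    using pda that unfolding pure_DI_assemblage_def OA_def IX_def by blast
  have coef_nn: "0 \<le> coef w af xf a x"
    if "w \<in> Om" "af \<in> {0,1}" "xf \<in> {0,1}" "a \<in> OA" "x \<in> IX" for w af xf a x
  proof -
    have "0 \<le> PX x xf w" using px that by blast
    moreover have "0 \<le> PA af a x w xf" using pa that by blast
    ultimately show ?thesis using Pnn[OF that(4,5)] by (simp add: coef_def)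
  qed
  define Nw where "Nw w af xf = (\<Sum>a\<in>OA. \<Sum>x\<in>IX. coef w af xf a x *\<^sub>R outer (y w a x))" for w af xf
  have out2: "(\<Sum>w\<in>Om. Nw w af xf) = \<sigma>t af xf" if "af \<in> {0,1}" "xf \<in> {0,1}" for af xf
  proof -
    have "locc_output OA IX P \<psi> Om K PX PA af xf = (\<Sum>w\<in>Om. Nw w af xf)"
      unfolding locc_output_def Nw_def coef_def y_def outer_Kv by (rule swap3)
    moreover have "locc_output OA IX P \<psi> Om K PX PA af xf = \<sigma>t af xf" using out that by blast
    ultimately show ?thesis by simp
  qed
  have QN: "Qf v (Nw w af xf) = of_real (\<Sum>a\<in>OA. \<Sum>x\<in>IX. coef w af xf a x * (cmod (ip v (y w a x)))\<^sup>2)"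
    for v w af xf
    by (simp add: Nw_def Qf_sum Qf_scaleR Qf_outer)
  have orth: "Qf (Tp af xf) (\<sigma>t af xf) = 0" for af xf
  proof -
    have "ip (Tp af xf) (T af xf) = 0"
      by (simp add: ip_def sum_2 Tp_def T_def algebra_simps)
    then show ?thesis by (simp add: \<sigma>t_def Qf_scaleR Qf_outer)
  qed
  have zero: "ip (Tp af xf) (y w a x) = 0"
    if w: "w \<in> Om" and af: "af \<in> {0,1}" and xf: "xf \<in> {0,1}" and a: "a \<in> OA" and x: "x \<in> IX"
      and cpos: "coef w af xf a x > 0" for w af xf a x
  proof -
    define h where "h w a x = coef w af xf a x * (cmod (ip (Tp af xf) (y w a x)))\<^sup>2" for w a x
    have hnn: "0 \<le> h w a x" if "w \<in> Om" "a \<in> OA" "x \<in> IX" for w a x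
      using coef_nn[OF that(1) af xf that(2,3)] by (simp add: h_def)
    have "complex_of_real (\<Sum>w\<in>Om. \<Sum>a\<in>OA. \<Sum>x\<in>IX. h w a x) = Qf (Tp af xf) (\<Sum>w\<in>Om. Nw w af xf)"
      by (simp add: Qf_sum QN h_def)
    also have "\<dots> = 0" using out2[OF af xf] orth by simp
    finally have s0: "(\<Sum>w\<in>Om. \<Sum>a\<in>OA. \<Sum>x\<in>IX. h w a x) = 0" by (simp only: of_real_eq_0_iff)
    have fOm: "finite Om" using ins by (simp add: instrument_def)
    have nn1: "\<And>w. w \<in> Om \<Longrightarrow> 0 \<le> (\<Sum>a\<in>OA. \<Sum>x\<in>IX. h w a x)"
      using hnn by (simp add: sum_nonneg)
    have "(\<Sum>a\<in>OA. \<Sum>x\<in>IX. h w a x) = 0"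
      using sum_nonneg_eq_0_iff[OF fOm, of "\<lambda>w. \<Sum>a\<in>OA. \<Sum>x\<in>IX. h w a x", OF nn1] s0 w by blast
    moreover have nn2: "\<And>a. a \<in> OA \<Longrightarrow> 0 \<le> (\<Sum>x\<in>IX. h w a x)"
      using hnn w by (simp add: sum_nonneg)
    ultimately have "(\<Sum>x\<in>IX. h w a x) = 0"
      using sum_nonneg_eq_0_iff[OF fOA, of "\<lambda>a. \<Sum>x\<in>IX. h w a x", OF nn2] a by blast
    moreover have nn3: "\<And>x. x \<in> IX \<Longrightarrow> 0 \<le> h w a x"
      using hnn w a by simp
    ultimately have "h w a x = 0"
      using sum_nonneg_eq_0_iff[OF fIX, of "\<lambda>x. h w a x", OF nn3] x by blast
    then show ?thesis using cpos by (simp add: h_def)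
  qed
  define \<alpha> where "\<alpha> w af xf = (\<Sum>a\<in>OA. \<Sum>x\<in>IX. coef w af xf a x * (cmod (ip (T af xf) (y w a x)))\<^sup>2)" for w af xf
  have NwT: "Nw w af xf = \<alpha> w af xf *\<^sub>R outer (T af xf)"
    if w: "w \<in> Om" and af: "af \<in> {0,1}" and xf: "xf \<in> {0,1}" for w af xf
    unfolding Nw_def \<alpha>_def scaleR_sum_left
  proof (intro sum.cong refl)
    fix a x assume a: "a \<in> OA" and x: "x \<in> IX"
    show "coef w af xf a x *\<^sub>R outer (y w a x) =
          (coef w af xf a x * (cmod (ip (T af xf) (y w a x)))\<^sup>2) *\<^sub>R outer (T af xf)"
      unfolding T_def
      by (rule term_lemma[OF unit coef_nn[OF w af xf a x]])
         (use zero[OF w af xf a x] in \<open>simp add: Tp_def\<close>)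
  qed
  have bal: "Nw w 0 0 + Nw w 1 0 = Nw w 0 1 + Nw w 1 1" if w: "w \<in> Om" for w
  proof -
    have "IX \<noteq> {}" using px w by auto
    then obtain x0 where x0: "x0 \<in> IX" by auto
    define \<rho> where "\<rho> = (\<Sum>a\<in>OA. P a x0 *\<^sub>R outer (\<psi> a x0))"
    have ns: "(\<Sum>a\<in>OA. P a x *\<^sub>R outer (\<psi> a x)) = \<rho>" if "x \<in> IX" for x
      using pda x0 that unfolding pure_DI_assemblage_def \<rho>_def OA_def IX_def by blast
    have main: "Nw w 0 xf + Nw w 1 xf = K w ** \<rho> ** adjm (K w)" if xf: "xf \<in> {0,1}" for xf
    proof -
      have "Nw w 0 xf + Nw w 1 xf = (\<Sum>a\<in>OA. \<Sum>x\<in>IX. (PX x xf w * P a x) *\<^sub>R outer (y w a x))"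
        unfolding Nw_def sum.distrib[symmetric] scaleR_add_left[symmetric]
      proof (intro sum.cong refl)
        fix a x assume a: "a \<in> OA" and x: "x \<in> IX"
        have "PA 0 a x w xf + PA 1 a x w xf = 1" using pa a x w xf by blast
        then have "coef w 0 xf a x + coef w 1 xf a x = PX x xf w * P a x"
          unfolding coef_def by (metis distrib_left distrib_right mult.right_neutral mult.commute)
        then show "(coef w 0 xf a x + coef w 1 xf a x) *\<^sub>R outer (y w a x) =
                   (PX x xf w * P a x) *\<^sub>R outer (y w a x)" by simp
      qed
      also have "\<dots> = (\<Sum>x\<in>IX. PX x xf w *\<^sub>R (\<Sum>a\<in>OA. P a x *\<^sub>R outer (y w a x)))"
        by (subst sum.swap) (simp add: scaleR_sum_right)
      also have "\<dots> = (\<Sum>x\<in>IX. PX x xf w *\<^sub>R (K w ** (\<Sum>a\<in>OA. P a x *\<^sub>R outer (\<psi> a x)) ** adjm (K w)))"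
        by (simp add: Phi_sum Phi_scaleR outer_Kv y_def)
      also have "\<dots> = (\<Sum>x\<in>IX. PX x xf w *\<^sub>R (K w ** \<rho> ** adjm (K w)))"
        using ns by simp
      also have "\<dots> = (\<Sum>x\<in>IX. PX x xf w) *\<^sub>R (K w ** \<rho> ** adjm (K w))"
        by (simp add: scaleR_sum_left)
      also have "\<dots> = K w ** \<rho> ** adjm (K w)"
      proof -
        have "(\<Sum>x\<in>IX. PX x xf w) = 1" using px w xf by blast
        then show ?thesis by simp
      qed
      finally show ?thesis .
    qed
    show ?thesis using main[of 0] main[of 1] by simp
  qed
  have pc: "p0 * p0 = c" using p0sq by (simp add: power2_eq_square)
  have rc: "r0 * r0 = 1 - c" using r0sq by (simp add: power2_eq_square)
  have eqs: "\<alpha> w 0 0 = \<alpha> w 0 1 \<and> \<alpha> w 1 0 = \<alpha> w 0 1 \<and> \<alpha> w 1 1 = \<alpha> w 0 1" if w: "w \<in> Om" for w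
  proof -
    have E: "\<alpha> w 0 0 *\<^sub>R outer (T 0 0) + \<alpha> w 1 0 *\<^sub>R outer (T 1 0) =
             \<alpha> w 0 1 *\<^sub>R outer (T 0 1) + \<alpha> w 1 1 *\<^sub>R outer (T 1 1)"
      using bal[OF w] NwT[OF w] by simp
    have E': "Re ((\<alpha> w 0 0 *\<^sub>R outer (T 0 0) + \<alpha> w 1 0 *\<^sub>R outer (T 1 0)) $ i $ j) =
             Re ((\<alpha> w 0 1 *\<^sub>R outer (T 0 1) + \<alpha> w 1 1 *\<^sub>R outer (T 1 1)) $ i $ j)" for i j
      using E by simp
    have e11: "\<alpha> w 0 0 = \<alpha> w 0 1 * c + \<alpha> w 1 1 * (1 - c)"
      using E'[of 1 1] by (simp add: T_def tv_def outer_def vector_scaleR_component pc rc)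
    have e22: "\<alpha> w 1 0 = \<alpha> w 0 1 * (1 - c) + \<alpha> w 1 1 * c"
      using E'[of 2 2] by (simp add: T_def tv_def outer_def vector_scaleR_component pc rc)
    have e12: "0 = \<alpha> w 0 1 * (p0 * r0) - \<alpha> w 1 1 * (p0 * r0)"
      using E'[of 1 2] by (simp add: T_def tv_def outer_def vector_scaleR_component algebra_simps)
    have "p0 * r0 \<noteq> 0" using p0pos r0pos by simp
    then have "\<alpha> w 0 1 = \<alpha> w 1 1" using e12 by (simp add: left_diff_distrib[symmetric])
    then show ?thesis using e11 e22 by (simp add: algebra_simps)
  qed
  have s00: "(\<Sum>w\<in>Om. \<alpha> w 0 0) = 1/2"
  proof -
    have "(\<Sum>w\<in>Om. Nw w 0 0) = (\<Sum>w\<in>Om. \<alpha> w 0 0 *\<^sub>R outer (T 0 0))"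
      by (rule sum.cong) (auto simp: NwT)
    then have "(\<Sum>w\<in>Om. \<alpha> w 0 0) *\<^sub>R outer (T 0 0) = \<sigma>t 0 0"
      using out2[of 0 0] by (simp add: scaleR_sum_left)
    then have "Re (((\<Sum>w\<in>Om. \<alpha> w 0 0) *\<^sub>R outer (T 0 0)) $ 1 $ 1) = Re (\<sigma>t 0 0 $ 1 $ 1)"
      by simp
    then show ?thesis by (simp add: \<sigma>t_def T_def tv_def outer_def vector_scaleR_component)
  qed
  then obtain w0 where w0: "w0 \<in> Om" "\<alpha> w0 0 0 \<noteq> 0"
    by (metis sum.neutral zero_neq_numeral divide_eq_0_iff one_neq_zero)
  have exU: "\<exists>u\<in>V. \<exists>l. l \<noteq> 0 \<and> (K w0 *v u) $ 1 = l * of_real (fst (tv af xf)) \<and>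
                (K w0 *v u) $ 2 = l * of_real (snd (tv af xf))"
    if af: "af \<in> {0,1}" and xf: "xf \<in> {0,1}" and nz: "\<alpha> w0 af xf \<noteq> 0" for af xf
  proof -
    from nz obtain a where a: "a \<in> OA" and
      "(\<Sum>x\<in>IX. coef w0 af xf a x * (cmod (ip (T af xf) (y w0 a x)))\<^sup>2) \<noteq> 0"
      unfolding \<alpha>_def by (meson sum.neutral)
    then obtain x where x: "x \<in> IX" and
      tnz: "coef w0 af xf a x * (cmod (ip (T af xf) (y w0 a x)))\<^sup>2 \<noteq> 0"
      by (meson sum.neutral)
    from tnz have cnz: "coef w0 af xf a x \<noteq> 0" and inz: "ip (T af xf) (y w0 a x) \<noteq> 0" by auto
    then have cpos: "coef w0 af xf a x > 0" using coef_nn[OF w0(1) af xf a x] by simp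
    have z: "ip (mk (of_real (- snd (tv af xf))) (of_real (fst (tv af xf)))) (y w0 a x) = 0"
      using zero[OF w0(1) af xf a x cpos] by (simp add: Tp_def)
    note sc = span_comp[OF unit z]
    show ?thesis
    proof (intro bexI exI conjI)
      show "\<psi> a x \<in> V" unfolding V_def using a x by auto
      show "ip (T af xf) (y w0 a x) \<noteq> 0" by (rule inz)
      show "(K w0 *v \<psi> a x) $ 1 = ip (T af xf) (y w0 a x) * of_real (fst (tv af xf))"
        using sc(1) by (simp add: T_def y_def)
      show "(K w0 *v \<psi> a x) $ 2 = ip (T af xf) (y w0 a x) * of_real (snd (tv af xf))"
        using sc(2) by (simp add: T_def y_def)
    qed
  qed
  note eq0 = eqs[OF w0(1)]
  obtain u1 l1 where u1: "u1 \<in> V" "l1 \<noteq> 0" "(K w0 *v u1) $ 1 = l1 * of_real (fst (tv 0 0))"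
      "(K w0 *v u1) $ 2 = l1 * of_real (snd (tv 0 0))"
    using exU[of 0 0] w0(2) by auto
  obtain u2 l2 where u2: "u2 \<in> V" "l2 \<noteq> 0" "(K w0 *v u2) $ 1 = l2 * of_real (fst (tv 1 0))"
      "(K w0 *v u2) $ 2 = l2 * of_real (snd (tv 1 0))"
    using exU[of 1 0] w0(2) eq0 by auto
  obtain u3 l3 where u3: "u3 \<in> V" "l3 \<noteq> 0" "(K w0 *v u3) $ 1 = l3 * of_real (fst (tv 0 1))"
      "(K w0 *v u3) $ 2 = l3 * of_real (snd (tv 0 1))"
    using exU[of 0 1] w0(2) eq0 by auto
  obtain u4 l4 where u4: "u4 \<in> V" "l4 \<noteq> 0" "(K w0 *v u4) $ 1 = l4 * of_real (fst (tv 1 1))"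
      "(K w0 *v u4) $ 2 = l4 * of_real (snd (tv 1 1))"
    using exU[of 1 1] w0(2) eq0 by auto
  have Kv1: "(K w0 *v u) $ 1 = K w0 $ 1 $ 1 * u $ 1 + K w0 $ 1 $ 2 * u $ 2" for u
    by (simp add: matrix_vector_mult_def sum_2)
  have Kv2: "(K w0 *v u) $ 2 = K w0 $ 2 $ 1 * u $ 1 + K w0 $ 2 $ 2 * u $ 2" for u
    by (simp add: matrix_vector_mult_def sum_2)
  have f1: "K w0 $ 1 $ 1 * u1 $ 1 + K w0 $ 1 $ 2 * u1 $ 2 = l1" using u1(3) Kv1 by (simp add: tv_def)
  have f2: "K w0 $ 2 $ 1 * u1 $ 1 + K w0 $ 2 $ 2 * u1 $ 2 = 0" using u1(4) Kv2 by (simp add: tv_def)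
  have f3: "K w0 $ 1 $ 1 * u2 $ 1 + K w0 $ 1 $ 2 * u2 $ 2 = 0" using u2(3) Kv1 by (simp add: tv_def)
  have f4: "K w0 $ 2 $ 1 * u2 $ 1 + K w0 $ 2 $ 2 * u2 $ 2 = l2" using u2(4) Kv2 by (simp add: tv_def)
  have f5: "K w0 $ 1 $ 1 * u3 $ 1 + K w0 $ 1 $ 2 * u3 $ 2 = l3 * of_real p0" using u3(3) Kv1 by (simp add: tv_def)
  have f6: "K w0 $ 2 $ 1 * u3 $ 1 + K w0 $ 2 $ 2 * u3 $ 2 = l3 * of_real r0" using u3(4) Kv2 by (simp add: tv_def)
  have f7: "K w0 $ 1 $ 1 * u4 $ 1 + K w0 $ 1 $ 2 * u4 $ 2 = -(l4 * of_real r0)" using u4(3) Kv1 by (simp add: tv_def)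
  have f8: "K w0 $ 2 $ 1 * u4 $ 1 + K w0 $ 2 $ 2 * u4 $ 2 = l4 * of_real p0" using u4(4) Kv2 by (simp add: tv_def)
  have r0nz: "complex_of_real r0 \<noteq> 0" using r0pos by simp
  define Aq where "Aq = (u1$1*u3$2-u1$2*u3$1)*(u2$1*u4$2-u2$2*u4$1)"
  define Bq where "Bq = (u1$1*u4$2-u1$2*u4$1)*(u2$1*u3$2-u2$2*u3$1)"
  have KA: "Aq \<noteq> 0 \<and> Aq * (of_real p0)^2 + Bq * (of_real r0)^2 = 0"
    using key_alg[OF f1 f2 f3 f4 f5 f6 f7 f8 u1(2) u2(2) u3(2) u4(2) r0nz]
    unfolding Aq_def Bq_def .
  define C where "C = complex_of_real c"
  have p2: "(complex_of_real p0)^2 = C" unfolding C_def using p0sq by (metis of_real_power)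
  have r2: "(complex_of_real r0)^2 = 1 - C" unfolding C_def using r0sq by (metis of_real_power of_real_1 of_real_diff)
  have lin: "Aq * C + Bq * (1 - C) = 0" using KA p2 r2 by simp
  have BA: "Bq - Aq \<noteq> 0"
  proof
    assume "Bq - Aq = 0"
    then have "Bq = Aq" by simp
    then have "Aq = 0" using lin by (simp add: algebra_simps)
    then show False using KA by simp
  qed
  have "C = Bq / (Bq - Aq)"
    using lin BA by (simp add: field_simps)
  also have "\<dots> = g (u1, u2, u3, u4)" by (simp add: g_def Aq_def Bq_def)
  also have "\<dots> \<in> F" unfolding F_def using u1(1) u2(1) u3(1) u4(1) by auto
  finally show False using cF by (simp add: C_def)
qed

end
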